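(* Let $n\ge2$ (prime or composite), $d\ge1$, $\alpha>1$, positive weights $\boldsymbol\gamma=\{\gamma_u\}$ with $\gamma_\emptyset=1$, $M>0$, and $\mathbf z\in\mathbb Z^d$. Then $$\Sigma_T\le M\,|\mathcal A_d(M)|\,S_{n,d,\alpha,\boldsymbol\gamma}(\mathbf z).$$ Moreover, if $\alpha>2$ then $$\Sigma_T\le M\,\big[S_{n,d,\alpha/2,\sqrt{\boldsymbol\gamma}}(\mathbf z)\big]^2.$$
   Context: Weights $\gamma_u>0$ for finite $u\subset\mathbb N$, $\gamma_\emptyset=1$; $\sqrt{\boldsymbol\gamma}$ denotes the weights $\{\gamma_u^{1/2}\}$. For smoothness $a>0$ and weights $\boldsymbol\beta$, and $\mathbf h\in\mathbb Z^d$: $\mathrm{supp}(\mathbf h)=\{j:h_j\ne0\}$, $r_{d,a,\boldsymbol\beta}(\mathbf h)=\beta_{\mathrm{supp}(\mathbf h)}^{-1}\prod_{j\in\mathrm{supp}(\mathbf h)}|h_j|^a$; write $r=r_{d,\alpha,\boldsymbol\gamma}$. $\mathcal A_d(M)=\{\mathbf h\in\mathbb Z^d:r(\mathbf h)\le M\}$. $$S_{n,d,a,\boldsymbol\beta}(\mathbf z)=\sum_{\mathbf h\in\mathbb Z^d}\frac1{r_{d,a,\boldsymbol\beta}(\mathbf h)}\sum_{\substack{\boldsymbol\ell\in\mathbb Z^d\setminus\{\mathbf0\}\\ \boldsymbol\ell\cdot\mathbf z\equiv0\ (\mathrm{mod}\ n)}}\frac1{r_{d,a,\boldsymbol\beta}(\mathbf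 h+\boldsymbol\ell)},$$ $$\Sigma_T:=\sum_{\mathbf h\in\mathcal A_d(M)}\sum_{\substack{\mathbf p\in\mathcal A_d(M)\\(\mathbf p-\mathbf h)\cdot\mathbf z\equiv0\ (\mathrm{mod}\ n)}}\sum_{\substack{\boldsymbol\ell\in\mathbb Z^d\setminus\{\mathbf0,\mathbf p-\mathbf h\}\\ \boldsymbol\ell\cdot\mathbf z\equiv0\ (\mathrm{mod}\ n)}}\frac1{r(\mathbf h+\boldsymbol\ell)}.$$ *)

theory Defs
  imports "HOL-Analysis.Analysis" "HOL-Number_Theory.Cong"
begin

definition Zd :: "nat \<Rightarrow> (nat \<Rightarrow> int) set" where
  "Zd d = {h. \<forall>j\<ge>d. h j = 0}"

definition supp :: "(nat \<Rightarrow> int) \<Rightarrow> nat set" where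
  "supp h = {j. h j \<noteq> 0}"

definition rr :: "real \<Rightarrow> (nat set \<Rightarrow> real) \<Rightarrow> (nat \<Rightarrow> int) \<Rightarrow> real" where
  "rr a \<beta> h = (\<Prod>j\<in>supp h. \<bar>real_of_int (h j)\<bar> powr a) / \<beta> (supp h)"

definition dotp :: "nat \<Rightarrow> (nat \<Rightarrow> int) \<Rightarrow> (nat \<Rightarrow> int) \<Rightarrow> int" where
  "dotp d l z = (\<Sum>j<d. l j * z j)"

definition vadd :: "(nat \<Rightarrow> int) \<Rightarrow> (nat \<Rightarrow> int) \<Rightarrow> (nat \<Rightarrow> int)" where
  "vadd h l = (\<lambda>j. h j + l j)"

definition vsub :: "(nat \<Rightarrow> int) \<Rightarrow> (nat \<Rightarrow> int) \<Rightarrow> (nat \<Rightarrow> int)" where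
  "vsub h l = (\<lambda>j. h j - l j)"

definition vzero :: "nat \<Rightarrow> int" where
  "vzero = (\<lambda>j. 0)"

definition dual_lattice :: "nat \<Rightarrow> nat \<Rightarrow> (nat \<Rightarrow> int) \<Rightarrow> (nat \<Rightarrow> int) set" where
  "dual_lattice n d z = {l \<in> Zd d. [dotp d l z = 0] (mod int n)}"

text \<open>S_{n,d,a,beta}(z); all terms are nonnegative, sums taken in ennreal.\<close>
definition Ssum :: "nat \<Rightarrow> nat \<Rightarrow> real \<Rightarrow> (nat set \<Rightarrow> real) \<Rightarrow> (nat \<Rightarrow> int) \<Rightarrow> ennreal" where
  "Ssum n d a \<beta> z = (\<Sum>\<^sub>\<infinity>h\<in>Zd d. ennreal (1 / rr a \<beta> h) *
      (\<Sum>\<^sub>\<infinity>l\<in>dual_lattice n d z - {vzero}. ennreal (1 / rr a \<beta> (vadd h l))))"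

definition Ad :: "nat \<Rightarrow> real \<Rightarrow> (nat set \<Rightarrow> real) \<Rightarrow> real \<Rightarrow> (nat \<Rightarrow> int) set" where
  "Ad d \<alpha> \<gamma> M = {h \<in> Zd d. rr \<alpha> \<gamma> h \<le> M}"

definition SigmaT :: "nat \<Rightarrow> nat \<Rightarrow> real \<Rightarrow> (nat set \<Rightarrow> real) \<Rightarrow> real \<Rightarrow> (nat \<Rightarrow> int) \<Rightarrow> ennreal" where
  "SigmaT n d \<alpha> \<gamma> M z =
     (\<Sum>h\<in>Ad d \<alpha> \<gamma> M. \<Sum>p\<in>{p \<in> Ad d \<alpha> \<gamma> M. [dotp d (vsub p h) z = 0] (mod int n)}.
        \<Sum>\<^sub>\<infinity>l\<in>dual_lattice n d z - {vzero, vsub p h}. ennreal (1 / rr \<alpha> \<gamma> (vadd h l)))"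

end

theory Submission
  imports Defs
begin

lemma enn_infsum_cmult: "(\<Sum>\<^sub>\<infinity>x\<in>A. c * f x) = c * (\<Sum>\<^sub>\<infinity>x\<in>A. (f x :: ennreal))"
proof -
  have "(\<Sum>\<^sub>\<infinity>x\<in>A. c * f x) = (SUP F\<in>{F. finite F \<and> F\<subseteq>A}. sum (\<lambda>x. c * f x) F)"
    by (rule nonneg_infsum_complete) simp
  also have "\<dots> = (SUP F\<in>{F. finite F \<and> F\<subseteq>A}. c * sum f F)"
    by (simp add: sum_distrib_left)
  also have "\<dots> = c * (SUP F\<in>{F. finite F \<and> F\<subseteq>A}. sum f F)"
    by (simp add: SUP_mult_left_ennreal)
  also have "(SUP F\<in>{F. finite F \<and> F\<subseteq>A}. sum f F) = (\<Sum>\<^sub>\<infinity>x\<in>A. f x)"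
    by (rule nonneg_infsum_complete[symmetric]) simp
  finally show ?thesis .
qed

lemma enn_infsum_mono:
  assumes "\<And>x. x \<in> A \<Longrightarrow> f x \<le> (g x :: ennreal)"
  shows "(\<Sum>\<^sub>\<infinity>x\<in>A. f x) \<le> (\<Sum>\<^sub>\<infinity>x\<in>A. g x)"
  by (rule infsum_mono) (use assms in \<open>auto simp: nonneg_summable_on_complete\<close>)

lemma enn_infsum_subset:
  assumes "A \<subseteq> B"
  shows "(\<Sum>\<^sub>\<infinity>x\<in>A. (f x :: ennreal)) \<le> (\<Sum>\<^sub>\<infinity>x\<in>B. f x)"
  by (rule infsum_mono_neutral) (use assms in \<open>auto simp: nonneg_summable_on_complete\<close>)

lemma enn_infsum_mono_neutral:
  assumes "A \<subseteq> B" "\<And>x. x \<in> A \<Longrightarrow> f x \<le> (g x :: ennreal)"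
  shows "(\<Sum>\<^sub>\<infinity>x\<in>A. f x) \<le> (\<Sum>\<^sub>\<infinity>x\<in>B. g x)"
  by (rule infsum_mono_neutral) (use assms in \<open>auto simp: nonneg_summable_on_complete\<close>)

lemma enn_sum_le_infsum:
  assumes "finite B" "B \<subseteq> A"
  shows "sum f B \<le> (\<Sum>\<^sub>\<infinity>x\<in>A. (f x :: ennreal))"
  using enn_infsum_subset[OF assms(2), of f] assms(1) by simp

lemma enn_elem_le_infsum:
  assumes "x \<in> A"
  shows "f x \<le> (\<Sum>\<^sub>\<infinity>x\<in>A. (f x :: ennreal))"
  using enn_sum_le_infsum[of "{x}" A f] assms by simp

lemma enn_sum_infsum_swap:
  assumes "finite P"
  shows "(\<Sum>p\<in>P. \<Sum>\<^sub>\<infinity>x\<in>A. g p x) = (\<Sum>\<^sub>\<infinity>x\<in>A. \<Sum>p\<in>P. (g p x :: ennreal))"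
  using assms
proof (induction P rule: finite_induct)
  case empty
  then show ?case by simp
next
  case (insert q P)
  have "(\<Sum>p\<in>insert q P. \<Sum>\<^sub>\<infinity>x\<in>A. g p x) = (\<Sum>\<^sub>\<infinity>x\<in>A. g q x) + (\<Sum>\<^sub>\<infinity>x\<in>A. \<Sum>p\<in>P. g p x)"
    using insert by simp
  also have "\<dots> = (\<Sum>\<^sub>\<infinity>x\<in>A. g q x + (\<Sum>p\<in>P. g p x))"
    by (rule infsum_add[symmetric]) (auto simp: nonneg_summable_on_complete)
  finally show ?case using insert by simp
qed

lemma Zd_supp_finite: "h \<in> Zd d \<Longrightarrow> finite (supp h)"
  unfolding Zd_def supp_def
  by (rule finite_subset[of _ "{..<d}"]) (auto simp: not_less[symmetric])

lemma Zd_vadd: "h \<in> Zd d \<Longrightarrow> l \<in> Zd d \<Longrightarrow> vadd h l \<in> Zd d"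
  unfolding Zd_def vadd_def by auto

lemma Zd_vsub: "h \<in> Zd d \<Longrightarrow> l \<in> Zd d \<Longrightarrow> vsub h l \<in> Zd d"
  unfolding Zd_def vsub_def by auto

lemma dotp_vsub: "dotp d (vsub p h) z = dotp d p z - dotp d h z"
  unfolding dotp_def vsub_def by (simp add: left_diff_distrib sum_subtractf)

lemma dotp_vadd: "dotp d (vadd p h) z = dotp d p z + dotp d h z"
  unfolding dotp_def vadd_def by (simp add: distrib_right sum.distrib)

lemma vadd_vsub: "vadd q (vsub p q) = p"
  unfolding vadd_def vsub_def by auto

lemma vadd_eq_iff: "vadd h l = p \<longleftrightarrow> l = vsub p h"
  unfolding vadd_def vsub_def fun_eq_iff by (metis add_diff_cancel_left' diff_add_cancel add.commute)

lemma rr_pos: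
  assumes "h \<in> Zd d" "\<And>u. finite u \<Longrightarrow> \<gamma> u > 0"
  shows "rr a \<gamma> h > 0"
proof -
  have "finite (supp h)" using assms Zd_supp_finite by blast
  then have "\<gamma> (supp h) > 0" using assms by blast
  moreover have "(\<Prod>j\<in>supp h. \<bar>real_of_int (h j)\<bar> powr a) > 0"
    by (rule prod_pos) (auto simp: supp_def)
  ultimately show ?thesis unfolding rr_def by simp
qed

lemma sqrt_prod: "sqrt (\<Prod>j\<in>S. f j) = (\<Prod>j\<in>S. sqrt (f j))"
  by (induction S rule: infinite_finite_induct) (auto simp: real_sqrt_mult)

lemma rr_half:
  "rr (a/2) (\<lambda>u. sqrt (\<gamma> u)) h = sqrt (rr a \<gamma> h)"
  unfolding rr_def
  by (simp add: real_sqrt_divide sqrt_prod powr_half_sqrt_powr)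

lemma vsub_vadd: "vsub (vadd h l) h = l"
  unfolding vadd_def vsub_def by auto

lemma vadd_vzero: "vadd q vzero = q"
  unfolding vadd_def vzero_def by auto

theorem lemma7:
  fixes n d :: nat and \<alpha> M :: real and \<gamma> :: "nat set \<Rightarrow> real" and z :: "nat \<Rightarrow> int"
  assumes "n \<ge> 2" and "d \<ge> 1" and "\<alpha> > 1" and "M > 0"
    and "\<And>u. finite u \<Longrightarrow> \<gamma> u > 0" and "\<gamma> {} = 1"
    and "z \<in> Zd d"
  shows "SigmaT n d \<alpha> \<gamma> M z \<le> ennreal M * of_nat (card (Ad d \<alpha> \<gamma> M)) * Ssum n d \<alpha> \<gamma> z
    \<and> (\<alpha> > 2 \<longrightarrow> SigmaT n d \<alpha> \<gamma> M z \<le> ennreal M * (Ssum n d (\<alpha>/2) (\<lambda>u. sqrt (\<gamma> u)) z)\<^sup>2)"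
proof -
  note gpos = assms(5)
  define L where "L = dual_lattice n d z"
  define A where "A = Ad d \<alpha> \<gamma> M"
  define r where "r = rr \<alpha> \<gamma>"
  define v where "v = (\<lambda>x. ennreal (1 / r x))"
  define w where "w = (\<lambda>x. ennreal (1 / rr (\<alpha>/2) (\<lambda>u. sqrt (\<gamma> u)) x))"
  define P where "P = (\<lambda>h. {p \<in> A. [dotp d (vsub p h) z = 0] (mod int n)})"
  define T where "T = (\<lambda>h p. \<Sum>\<^sub>\<infinity>l\<in>L - {vzero, vsub p h}. v (vadd h l))"
  have Sig: "SigmaT n d \<alpha> \<gamma> M z = (\<Sum>h\<in>A. \<Sum>p\<in>P h. T h p)"
    by (simp add: SigmaT_def A_def P_def L_def v_def r_def T_def)
  have LZ: "L \<subseteq> Zd d" by (auto simp: L_def dual_lattice_def)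
  have AZ: "A \<subseteq> Zd d" by (auto simp: A_def Ad_def)
  have Lmem: "l \<in> L \<longleftrightarrow> l \<in> Zd d \<and> int n dvd dotp d l z" for l
    by (simp add: L_def dual_lattice_def cong_0_iff)
  have Pmem: "p \<in> P h \<longleftrightarrow> p \<in> A \<and> int n dvd (dotp d p z - dotp d h z)" for p h
    by (simp add: P_def cong_0_iff dotp_vsub)
  have rpos: "r x > 0" if "x \<in> Zd d" for x
    unfolding r_def by (rule rr_pos[OF that gpos])
  have rA: "x \<in> A \<Longrightarrow> r x \<le> M" for x
    by (simp add: A_def Ad_def r_def)
  show ?thesis
  proof (cases "finite A")
    case False
    then have "SigmaT n d \<alpha> \<gamma> M z = 0" using Sig by simp
    then show ?thesis by simp
  next
    case finA: True
    have finP: "finite (P h)" for h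
      by (rule finite_subset[OF _ finA]) (auto simp: Pmem)
    define X where "X = (\<lambda>h. \<Sum>\<^sub>\<infinity>l\<in>L - {vzero}. v (vadd h l))"
    have S1: "Ssum n d \<alpha> \<gamma> z = (\<Sum>\<^sub>\<infinity>h\<in>Zd d. v h * X h)"
      by (simp add: Ssum_def X_def v_def r_def L_def)
    have oneA: "1 \<le> ennreal M * v h" if "h \<in> A" for h
    proof -
      have h0: "r h > 0" using rpos AZ that by blast
      have "1 \<le> M * (1 / r h)" using h0 rA[OF that] by (simp add: field_simps)
      then have "ennreal 1 \<le> ennreal (M * (1 / r h))" by (rule ennreal_leI)
      moreover have "ennreal (M * (1 / r h)) = ennreal M * v h"
        unfolding v_def using h0 \<open>M > 0\<close> by (intro ennreal_mult) auto
      ultimately show ?thesis by (metis ennreal_1)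
    qed
    have step1: "(\<Sum>p\<in>P h. T h p) \<le> of_nat (card A) * (ennreal M * (v h * X h))" if "h \<in> A" for h
    proof -
      have "(\<Sum>p\<in>P h. T h p) \<le> (\<Sum>p\<in>P h. X h)"
        by (rule sum_mono) (unfold T_def X_def, rule enn_infsum_subset, blast)
      also have "\<dots> = of_nat (card (P h)) * X h" by simp
      also have "\<dots> \<le> of_nat (card A) * X h"
        by (intro mult_right_mono) (auto intro!: card_mono finA simp: Pmem)
      also have "\<dots> \<le> of_nat (card A) * ((ennreal M * v h) * X h)"
        using mult_right_mono[OF oneA[OF that], of "X h"] by (intro mult_left_mono) auto
      finally show ?thesis by (simp add: mult_ac)
    qed
    have part1: "SigmaT n d \<alpha> \<gamma> M z \<le> ennreal M * of_nat (card A) * Ssum n d \<alpha> \<gamma> z"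
    proof -
      have "SigmaT n d \<alpha> \<gamma> M z \<le> (\<Sum>h\<in>A. of_nat (card A) * (ennreal M * (v h * X h)))"
        unfolding Sig by (rule sum_mono) (rule step1)
      also have "\<dots> = ennreal M * of_nat (card A) * (\<Sum>h\<in>A. v h * X h)"
        by (simp add: sum_distrib_left mult_ac)
      also have "\<dots> \<le> ennreal M * of_nat (card A) * Ssum n d \<alpha> \<gamma> z"
        unfolding S1 by (intro mult_left_mono enn_sum_le_infsum finA AZ) auto
      finally show ?thesis .
    qed
    define a where "a = (\<lambda>q. w q * (\<Sum>\<^sub>\<infinity>m\<in>L - {vzero}. w (vadd q m)))"
    define S' where "S' = Ssum n d (\<alpha>/2) (\<lambda>u. sqrt (\<gamma> u)) z"
    have S2: "S' = (\<Sum>\<^sub>\<infinity>q\<in>Zd d. a q)"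
      by (simp add: S'_def Ssum_def a_def w_def L_def)
    have wr: "w x = ennreal (1 / sqrt (r x))" for x
      by (simp add: w_def r_def rr_half)
    have vw: "v q = w q * w q" if "q \<in> Zd d" for q
    proof -
      have q0: "r q > 0" using rpos that by blast
      have "1 / r q = (1 / sqrt (r q)) * (1 / sqrt (r q))"
        using q0 by (simp add: field_simps)
      then show ?thesis unfolding v_def wr using q0 by (metis ennreal_mult less_eq_real_def real_sqrt_ge_zero zero_le_divide_1_iff)
    qed
    have one2: "1 \<le> ennreal M * (w h * w p)" if "h \<in> A" "p \<in> A" for h p
    proof -
      have h0: "r h > 0" using rpos AZ that by blast
      have p0: "r p > 0" using rpos AZ that by blast
      have "sqrt (r h) * sqrt (r p) \<le> sqrt M * sqrt M"
        using h0 p0 rA that \<open>M > 0\<close> by (intro mult_mono) auto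
      also have "\<dots> = M" using \<open>M > 0\<close> by simp
      finally have "1 \<le> M * (1 / sqrt (r h) * (1 / sqrt (r p)))"
        using h0 p0 by (simp add: field_simps)
      then have "ennreal 1 \<le> ennreal (M * (1 / sqrt (r h) * (1 / sqrt (r p))))" by (rule ennreal_leI)
      moreover have "ennreal (M * (1 / sqrt (r h) * (1 / sqrt (r p)))) = ennreal M * (w h * w p)"
        unfolding wr using h0 p0 \<open>M > 0\<close>
        by (subst ennreal_mult, simp, simp, subst ennreal_mult, auto)
      ultimately show ?thesis by (metis ennreal_1)
    qed
    have aS: "a q \<le> S'" if "q \<in> Zd d" for q
      unfolding S2 by (rule enn_elem_le_infsum[OF that])
    have inner: "(\<Sum>p\<in>P h - {q}. w p) \<le> (\<Sum>\<^sub>\<infinity>m\<in>L - {vzero}. w (vadd q m))"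
      if "q \<in> Zd d" "int n dvd (dotp d q z - dotp d h z)" for h q
    proof -
      have inj: "inj_on (\<lambda>p. vsub p q) (P h - {q})"
        by (rule inj_onI) (metis vadd_vsub)
      have "(\<Sum>p\<in>P h - {q}. w p) = (\<Sum>p\<in>P h - {q}. w (vadd q (vsub p q)))"
        by (simp add: vadd_vsub)
      also have "\<dots> = (\<Sum>m\<in>(\<lambda>p. vsub p q) ` (P h - {q}). w (vadd q m))"
        by (rule sum.reindex[OF inj, symmetric, unfolded comp_def])
      also have "\<dots> \<le> (\<Sum>\<^sub>\<infinity>m\<in>L - {vzero}. w (vadd q m))"
      proof (rule enn_sum_le_infsum)
        show "finite ((\<lambda>p. vsub p q) ` (P h - {q}))" using finP by simp
        show "(\<lambda>p. vsub p q) ` (P h - {q}) \<subseteq> L - {vzero}"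
        proof
          fix m assume "m \<in> (\<lambda>p. vsub p q) ` (P h - {q})"
          then obtain p where p: "p \<in> P h" "p \<noteq> q" and m: "m = vsub p q" by blast
          have pZ: "p \<in> Zd d" using p AZ by (auto simp: Pmem)
          have d1: "int n dvd (dotp d p z - dotp d h z)" using p by (simp add: Pmem)
          have "int n dvd ((dotp d p z - dotp d h z) - (dotp d q z - dotp d h z))"
            using d1 that(2) by (rule dvd_diff)
          then have "int n dvd dotp d m z" by (simp add: m dotp_vsub)
          moreover have "m \<in> Zd d" using m pZ that(1) Zd_vsub by blast
          moreover have "m \<noteq> vzero"
            using p m vadd_vsub[of q p] vadd_vzero[of q] by metis
          ultimately show "m \<in> L - {vzero}" by (simp add: Lmem)
        qed
      qed
      finally show ?thesis .
    qed
    have main_h: "(\<Sum>p\<in>P h. T h p) \<le> ennreal M * S' * a h" if hA: "h \<in> A" for h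
    proof -
      have hZ: "h \<in> Zd d" using hA AZ by blast
      define G where "G = (\<lambda>p l. if vadd h l = p then 0 else w p * (w (vadd h l) * w (vadd h l)))"
      have Tp: "T h p \<le> ennreal M * w h * (\<Sum>\<^sub>\<infinity>l\<in>L - {vzero}. G p l)" if pP: "p \<in> P h" for p
      proof -
        have pA: "p \<in> A" using pP by (simp add: Pmem)
        have "T h p \<le> (\<Sum>\<^sub>\<infinity>l\<in>L - {vzero}. ennreal M * w h * G p l)"
          unfolding T_def
        proof (rule enn_infsum_mono_neutral)
          show "L - {vzero, vsub p h} \<subseteq> L - {vzero}" by blast
          fix l assume l: "l \<in> L - {vzero, vsub p h}"
          then have ne: "vadd h l \<noteq> p" by (simp add: vadd_eq_iff)
          have qZ: "vadd h l \<in> Zd d" using l LZ hZ Zd_vadd by blast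
          have "v (vadd h l) = 1 * v (vadd h l)" by simp
          also have "\<dots> \<le> (ennreal M * (w h * w p)) * v (vadd h l)"
            by (rule mult_right_mono[OF one2[OF hA pA]]) simp
          finally show "v (vadd h l) \<le> ennreal M * w h * G p l"
            using ne by (simp add: G_def vw[OF qZ] mult_ac)
        qed
        also have "\<dots> = ennreal M * w h * (\<Sum>\<^sub>\<infinity>l\<in>L - {vzero}. G p l)"
          by (rule enn_infsum_cmult)
        finally show ?thesis .
      qed
      have Gsum: "(\<Sum>p\<in>P h. G p l) \<le> S' * w (vadd h l)" if l: "l \<in> L - {vzero}" for l
      proof -
        define q where "q = vadd h l"
        have qZ: "q \<in> Zd d" using l LZ hZ Zd_vadd q_def by blast
        have qd: "int n dvd (dotp d q z - dotp d h z)"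
          using l by (simp add: q_def dotp_vadd Lmem)
        have "(\<Sum>p\<in>P h. G p l) = (\<Sum>p\<in>P h - {q}. G p l)"
          by (rule sum.mono_neutral_right) (auto simp: G_def q_def finP)
        also have "\<dots> = (\<Sum>p\<in>P h - {q}. w p * (w q * w q))"
          by (rule sum.cong) (auto simp: G_def q_def)
        also have "\<dots> = (\<Sum>p\<in>P h - {q}. w p) * (w q * w q)"
          by (simp add: sum_distrib_right)
        also have "\<dots> \<le> (\<Sum>\<^sub>\<infinity>m\<in>L - {vzero}. w (vadd q m)) * (w q * w q)"
          by (rule mult_right_mono[OF inner[OF qZ qd]]) simp
        also have "\<dots> = a q * w q" by (simp add: a_def mult_ac)
        also have "\<dots> \<le> S' * w q" by (rule mult_right_mono[OF aS[OF qZ]]) simp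
        finally show ?thesis by (simp add: q_def)
      qed
      have "(\<Sum>p\<in>P h. T h p) \<le> (\<Sum>p\<in>P h. ennreal M * w h * (\<Sum>\<^sub>\<infinity>l\<in>L - {vzero}. G p l))"
        by (rule sum_mono) (rule Tp)
      also have "\<dots> = ennreal M * w h * (\<Sum>p\<in>P h. \<Sum>\<^sub>\<infinity>l\<in>L - {vzero}. G p l)"
        by (simp add: sum_distrib_left)
      also have "\<dots> = ennreal M * w h * (\<Sum>\<^sub>\<infinity>l\<in>L - {vzero}. \<Sum>p\<in>P h. G p l)"
        by (simp add: enn_sum_infsum_swap[OF finP])
      also have "\<dots> \<le> ennreal M * w h * (\<Sum>\<^sub>\<infinity>l\<in>L - {vzero}. S' * w (vadd h l))"
        by (intro mult_left_mono enn_infsum_mono Gsum) auto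
      also have "\<dots> = ennreal M * w h * (S' * (\<Sum>\<^sub>\<infinity>l\<in>L - {vzero}. w (vadd h l)))"
        by (simp add: enn_infsum_cmult)
      finally show ?thesis by (simp add: a_def mult_ac)
    qed
    have part2: "SigmaT n d \<alpha> \<gamma> M z \<le> ennreal M * S'\<^sup>2"
    proof -
      have "SigmaT n d \<alpha> \<gamma> M z \<le> (\<Sum>h\<in>A. ennreal M * S' * a h)"
        unfolding Sig by (rule sum_mono) (rule main_h)
      also have "\<dots> = ennreal M * S' * (\<Sum>h\<in>A. a h)"
        by (simp add: sum_distrib_left)
      also have "\<dots> \<le> ennreal M * S' * S'"
        unfolding S2 by (intro mult_left_mono enn_sum_le_infsum finA AZ) auto
      finally show ?thesis by (simp add: power2_eq_square mult_ac)
    qed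
    show ?thesis using part1 part2 by (simp add: A_def S'_def)
  qed
qed

end
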